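(* Let $\{v_1,\dots,v_n\}$ be a basis of $\mathbb{C}^n$ and $m_1,\dots,m_n\in\mathbb{R}_+$, and let $\Psi(z)=\max_{1\le j\le n} m_j\log|z\cdot\bar v_j|$ for $z\in\mathbb{D}^n$. Then there exists an orthonormal basis $\{\tilde v_1,\dots,\tilde v_n\}$ of $\mathbb{C}^n$ such that the function $\tilde\Psi(z):=\max_{1\le j\le n} m_j\log|z\cdot\overline{\tilde v_j}|$ satisfies $\tilde\Psi-\Psi\in L^\infty(\mathbb{D}^n)$.
   Context: $\mathbb{D}$ is the unit disk in $\mathbb{C}$. For $z,w\in\mathbb{C}^n$, $z\cdot\bar w=\sum_j z_j\bar w_j$ is the standard Hermitian product. *)

theory Defs
  imports "HOL-Analysis.Analysis"
begin

definition herm :: "complex ^ 'n \<Rightarrow> complex ^ 'n \<Rightarrow> complex" where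
  "herm z w = (\<Sum>i\<in>UNIV. z $ i * cnj (w $ i))"

definition logabs :: "complex \<Rightarrow> ereal" where
  "logabs x = (if x = 0 then - \<infinity> else ereal (ln (cmod x)))"

definition is_basis_C :: "('n::finite \<Rightarrow> complex ^ 'n) \<Rightarrow> bool" where
  "is_basis_C v \<longleftrightarrow>
     (\<forall>c::'n \<Rightarrow> complex. (\<Sum>j\<in>UNIV. c j *s v j) = 0 \<longrightarrow> (\<forall>j. c j = 0)) \<and>
     (\<forall>w::complex ^ 'n. \<exists>c::'n \<Rightarrow> complex. w = (\<Sum>j\<in>UNIV. c j *s v j))"

definition is_orthonormal_basis_C :: "('n::finite \<Rightarrow> complex ^ 'n) \<Rightarrow> bool" where
  "is_orthonormal_basis_C v \<longleftrightarrow> is_basis_C v \<and>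
     (\<forall>i j. herm (v i) (v j) = (if i = j then 1 else 0))"

definition polydisc :: "(complex ^ 'n) set" where
  "polydisc = {z. \<forall>i. cmod (z $ i) < 1}"

definition Psi :: "('n::finite \<Rightarrow> real) \<Rightarrow> ('n \<Rightarrow> complex ^ 'n) \<Rightarrow> complex ^ 'n \<Rightarrow> ereal" where
  "Psi m v z = Max (range (\<lambda>j. ereal (m j) * logabs (herm z (v j))))"

definition in_Linfty_polydisc :: "(complex ^ 'n \<Rightarrow> ereal) \<Rightarrow> bool" where
  "in_Linfty_polydisc f \<longleftrightarrow>
     f \<in> borel_measurable (lebesgue_on polydisc) \<and>
     (\<exists>C::real. AE z in lebesgue_on polydisc. \<bar>f z\<bar> \<le> ereal C)"

end

theory Submission
  imports Defs
begin

lemma herm_add_left: "herm (a + b) c = herm a c + herm b c"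
  unfolding herm_def by (simp add: sum.distrib distrib_right)
lemma herm_diff_left: "herm (a - b) c = herm a c - herm b c"
  unfolding herm_def by (simp add: sum_subtractf left_diff_distrib)
lemma herm_scale_left: "herm (k *s a) b = k * herm a b"
  unfolding herm_def by (simp add: sum_distrib_left mult.assoc)
lemma herm_sum_left: "herm (\<Sum>i\<in>A. f i) b = (\<Sum>i\<in>A. herm (f i) b)"
  unfolding herm_def by (simp add: sum_distrib_right sum.swap[of _ A])
lemma herm_conj: "herm a b = cnj (herm b a)"
  unfolding herm_def by (simp add: mult.commute)
lemma herm_scale_right: "herm a (k *s b) = cnj k * herm a b"
  by (metis complex_cnj_cnj complex_cnj_mult herm_conj herm_scale_left)
lemma herm_zero_left[simp]: "herm 0 b = 0"
  unfolding herm_def by simp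
lemma herm_self: "herm a a = complex_of_real ((norm a)^2)"
proof -
  have "(norm a)^2 = (\<Sum>i\<in>UNIV. (cmod (a$i))^2)"
    unfolding norm_vec_def L2_set_def by (simp add: sum_nonneg)
  then show ?thesis unfolding herm_def
    by (simp add: complex_norm_square[symmetric])
qed
lemma herm_self_eq_0: "herm a a = 0 \<longleftrightarrow> a = 0"
  by (simp add: herm_self)


lemma gram_schmidt:
  fixes xs :: "(complex^'n) list"
  assumes "\<forall>k<length xs. xs!k \<notin> vec.span (set (take k xs))"
  shows "\<exists>ys. length ys = length xs \<and>
    (\<forall>i<length ys. \<forall>j<length ys. herm (ys!i) (ys!j) = (if i = j then 1 else 0)) \<and>
    (\<forall>k<length xs. ys!k \<in> vec.span (set (take (Suc k) xs))) \<and>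
    (\<forall>k<length xs. xs!k \<in> vec.span (set (take (Suc k) ys)))"
  using assms
proof (induction xs rule: rev_induct)
  case Nil
  then show ?case by simp
next
  case (snoc x xs)
  define n where "n = length xs"
  have "\<forall>k<length xs. xs!k \<notin> vec.span (set (take k xs))"
  proof (intro allI impI)
    fix k assume k: "k < length xs"
    have "(xs @ [x]) ! k \<notin> vec.span (set (take k (xs @ [x])))"
      using snoc.prems k by simp
    then show "xs!k \<notin> vec.span (set (take k xs))" using k by (simp add: nth_append)
  qed
  then obtain ys where len: "length ys = n"
    and orth: "\<forall>i<length ys. \<forall>j<length ys. herm (ys!i) (ys!j) = (if i = j then 1 else 0)"
    and ha: "\<forall>k<length xs. ys!k \<in> vec.span (set (take (Suc k) xs))"
    and hb: "\<forall>k<length xs. xs!k \<in> vec.span (set (take (Suc k) ys))"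
    using snoc.IH n_def by blast
  define s where "s = (\<Sum>i<n. herm x (ys!i) *s ys!i)"
  define u where "u = x - s"
  have ys_span: "ys!i \<in> vec.span (set xs)" if "i < n" for i
  proof -
    have "ys!i \<in> vec.span (set (take (Suc i) xs))" using ha that n_def by auto
    moreover have "vec.span (set (take (Suc i) xs)) \<subseteq> vec.span (set xs)"
      by (intro vec.span_mono set_take_subset)
    ultimately show ?thesis by blast
  qed
  have s_span: "s \<in> vec.span (set xs)"
    unfolding s_def by (intro vec.span_sum vec.span_scale ys_span) auto
  have "x \<notin> vec.span (set xs)"
    using snoc.prems[rule_format, of n] n_def by simp
  then have u0: "u \<noteq> 0" using s_span unfolding u_def by auto
  then have nu: "norm u > 0" by simp
  define w where "w = (1 / complex_of_real (norm u)) *s u"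
  have hu: "herm u (ys!j) = 0" if j: "j < n" for j
  proof -
    have "herm s (ys!j) = (\<Sum>i<n. herm x (ys!i) * (if i = j then 1 else 0))"
      unfolding s_def herm_sum_left herm_scale_left using orth len j by simp
    also have "\<dots> = herm x (ys!j)" using j by (simp add: if_distrib cong: if_cong)
    finally show ?thesis unfolding u_def herm_diff_left by simp
  qed
  have hw1: "herm w (ys!j) = 0" if "j < n" for j
    unfolding w_def herm_scale_left using hu that by simp
  have hw2: "herm (ys!j) w = 0" if "j < n" for j
    using hw1[OF that] herm_conj[of "ys!j" w] by simp
  have hww: "herm w w = 1"
  proof -
    have "herm w w = (1 / complex_of_real (norm u)) * (cnj (1 / complex_of_real (norm u)) * herm u u)"
      unfolding w_def herm_scale_left herm_scale_right by simp
    also have "\<dots> = 1" unfolding herm_self using nu by (simp add: power2_eq_square)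
    finally show ?thesis .
  qed
  define ys' where "ys' = ys @ [w]"
  have "length ys' = length (xs @ [x])" unfolding ys'_def using len n_def by simp
  moreover have "\<forall>i<length ys'. \<forall>j<length ys'. herm (ys'!i) (ys'!j) = (if i = j then 1 else 0)"
  proof (intro allI impI)
    fix i j assume i: "i < length ys'" and j: "j < length ys'"
    then have i': "i \<le> n" and j': "j \<le> n" unfolding ys'_def using len by auto
    show "herm (ys'!i) (ys'!j) = (if i = j then 1 else 0)"
    proof (cases "i = n")
      case True
      then show ?thesis using j' hww hw1[of j] len unfolding ys'_def
        by (cases "j = n") (auto simp: nth_append)
    next
      case False
      then have "i < n" using i' by simp
      then show ?thesis using j' hw2[of i] orth len unfolding ys'_def
        by (cases "j = n") (auto simp: nth_append)
    qed
  qed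
  moreover have "\<forall>k<length (xs @ [x]). ys'!k \<in> vec.span (set (take (Suc k) (xs @ [x])))"
  proof (intro allI impI)
    fix k assume k: "k < length (xs @ [x])"
    show "ys'!k \<in> vec.span (set (take (Suc k) (xs @ [x])))"
    proof (cases "k = n")
      case True
      have "vec.span (set xs) \<subseteq> vec.span (set (xs @ [x]))" by (intro vec.span_mono) auto
      then have "s \<in> vec.span (set (xs @ [x]))" using s_span by blast
      moreover have "x \<in> vec.span (set (xs @ [x]))" by (intro vec.span_base) auto
      ultimately have "w \<in> vec.span (set (xs @ [x]))"
        unfolding w_def u_def by (intro vec.span_scale vec.span_diff)
      then show ?thesis using True len n_def unfolding ys'_def by (simp add: nth_append)
    next
      case False
      then have "k < n" using k n_def by simp
      then show ?thesis using ha len n_def unfolding ys'_def by (simp add: nth_append)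
    qed
  qed
  moreover have "\<forall>k<length (xs @ [x]). (xs @ [x])!k \<in> vec.span (set (take (Suc k) ys'))"
  proof (intro allI impI)
    fix k assume k: "k < length (xs @ [x])"
    show "(xs @ [x])!k \<in> vec.span (set (take (Suc k) ys'))"
    proof (cases "k = n")
      case True
      have "s \<in> vec.span (set ys')"
        unfolding s_def ys'_def using len
        by (intro vec.span_sum vec.span_scale vec.span_base) auto
      moreover have "w \<in> vec.span (set ys')" unfolding ys'_def by (intro vec.span_base) auto
      ultimately have "s + complex_of_real (norm u) *s w \<in> vec.span (set ys')"
        by (intro vec.span_add vec.span_scale)
      moreover have "s + complex_of_real (norm u) *s w = x"
        unfolding w_def u_def using nu by (simp add: vector_smult_assoc)
      ultimately show ?thesis using True len n_def unfolding ys'_def by simp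
    next
      case False
      then have "k < n" using k n_def by simp
      then show ?thesis using hb len n_def unfolding ys'_def by (simp add: nth_append)
    qed
  qed
  ultimately show ?case by blast
qed


lemma bound_one:
  fixes f c :: "'i \<Rightarrow> complex" and m :: "'i \<Rightarrow> real"
  assumes S: "finite S" "jj \<in> S" and mS: "\<forall>i\<in>S. m i \<le> mj" "\<forall>i\<in>S. m i > 0"
    and fB: "\<forall>i\<in>S. cmod (f i) \<le> B" and B1: "B \<ge> 1" and mj: "mj > 0"
    and y: "cmod y \<le> (\<Sum>i\<in>S. cmod (c i) * cmod (f i))"
  shows "cmod y powr mj \<le> (real (card S) * (1 + (\<Sum>i\<in>S. cmod (c i))) * B) powr mj
           * Max ((\<lambda>i. cmod (f i) powr m i) ` S)"
proof -
  define A where "A = 1 + (\<Sum>i\<in>S. cmod (c i))"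
  define M where "M = Max ((\<lambda>i. cmod (f i)) ` S)"
  have A0: "A \<ge> 1" unfolding A_def by (simp add: sum_nonneg)
  have "M \<in> (\<lambda>i. cmod (f i)) ` S" unfolding M_def using S by (intro Max_in) auto
  then obtain i0 where i0: "i0 \<in> S" "cmod (f i0) = M" by auto
  have fM: "cmod (f i) \<le> M" if "i \<in> S" for i unfolding M_def using S that by (intro Max_ge) auto
  have M0: "M \<ge> 0" using i0 by auto
  have MB: "M \<le> B" using i0 fB by auto
  have "cmod y \<le> (\<Sum>i\<in>S. A * M)"
  proof -
    have "(\<Sum>i\<in>S. cmod (c i) * cmod (f i)) \<le> (\<Sum>i\<in>S. A * M)"
    proof (intro sum_mono)
      fix i assume i: "i \<in> S"
      have "cmod (c i) \<le> A" unfolding A_def using S i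
        by (smt (verit, ccfv_SIG) member_le_sum norm_ge_zero)
      then show "cmod (c i) * cmod (f i) \<le> A * M"
        using fM[OF i] M0 A0 by (intro mult_mono) auto
    qed
    then show ?thesis using y by linarith
  qed
  also have "\<dots> = real (card S) * A * M" by simp
  finally have yb: "cmod y \<le> real (card S) * A * M" .
  have "cmod y powr mj \<le> (real (card S) * A * M) powr mj"
    using yb mj by (intro powr_mono2) auto
  also have "\<dots> = (real (card S) * A) powr mj * M powr mj"
    using A0 M0 by (simp add: powr_mult)
  also have "M powr mj = M powr m i0 * M powr (mj - m i0)"
    by (simp flip: powr_add)
  also have "\<dots> \<le> Max ((\<lambda>i. cmod (f i) powr m i) ` S) * B powr mj"
  proof (intro mult_mono)
    show "M powr m i0 \<le> Max ((\<lambda>i. cmod (f i) powr m i) ` S)"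
      using i0 S by (intro Max_ge) auto
    have "M powr (mj - m i0) \<le> B powr (mj - m i0)"
      using M0 MB mS i0 by (intro powr_mono2) auto
    also have "\<dots> \<le> B powr mj" using B1 mS i0 by (intro powr_mono) auto
    finally show "M powr (mj - m i0) \<le> B powr mj" .
    show "0 \<le> Max ((\<lambda>i. cmod (f i) powr m i) ` S)"
      using i0 S by (meson Max_ge finite_imageI image_eqI order_trans powr_ge_zero)
  qed auto
  finally have "cmod y powr mj \<le> (real (card S) * A) powr mj * (Max ((\<lambda>i. cmod (f i) powr m i) ` S) * B powr mj)"
    by (simp add: mult_left_mono)
  also have "\<dots> = (real (card S) * A * B) powr mj * Max ((\<lambda>i. cmod (f i) powr m i) ` S)"
    using A0 B1 by (simp add: powr_mult)
  finally show ?thesis unfolding A_def .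
qed


lemma bound_all:
  fixes f g :: "'a \<Rightarrow> 'n::finite \<Rightarrow> complex" and m :: "'n \<Rightarrow> real"
  assumes m: "\<And>j. m j > 0"
    and rep: "\<And>j. \<exists>c. \<forall>z\<in>D. g z j = (\<Sum>i\<in>{i. m i \<le> m j}. c i * f z i)"
    and B: "\<And>z i. z \<in> D \<Longrightarrow> cmod (f z i) \<le> B"
  shows "\<exists>C>0. \<forall>z\<in>D. Max (range (\<lambda>j. cmod (g z j) powr m j))
            \<le> C * Max (range (\<lambda>j. cmod (f z j) powr m j))"
proof -
  have "\<exists>c. \<forall>j. \<forall>z\<in>D. g z j = (\<Sum>i\<in>{i. m i \<le> m j}. c j i * f z i)"
    using rep by metis
  then obtain c where c: "\<And>j z. z \<in> D \<Longrightarrow> g z j = (\<Sum>i\<in>{i. m i \<le> m j}. c j i * f z i)"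
    by blast
  define B' where "B' = max B 1"
  define S where "S j = {i. m i \<le> m j}" for j
  define K where "K j = (real (card (S j)) * (1 + (\<Sum>i\<in>S j. cmod (c j i))) * B') powr m j" for j
  define C where "C = 1 + (\<Sum>j\<in>UNIV. K j)"
  have K0: "K j \<ge> 0" for j unfolding K_def by simp
  have KC: "K j \<le> C" for j
  proof -
    have "K j \<le> (\<Sum>j\<in>UNIV. K j)" using K0 by (intro member_le_sum) auto
    then show ?thesis unfolding C_def by simp
  qed
  have C0: "C > 0" unfolding C_def using K0 by (smt (verit) sum_nonneg)
  have "\<forall>z\<in>D. Max (range (\<lambda>j. cmod (g z j) powr m j)) \<le> C * Max (range (\<lambda>j. cmod (f z j) powr m j))"
  proof
    fix z assume z: "z \<in> D"
    define E where "E = Max (range (\<lambda>j. cmod (f z j) powr m j))"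
    have E0: "E \<ge> 0" unfolding E_def
      by (rule order_trans[OF _ Max_ge[of _ "cmod (f z undefined) powr m undefined"]]) auto
    show "Max (range (\<lambda>j. cmod (g z j) powr m j)) \<le> C * E"
    proof (subst Max_le_iff, simp, simp, intro ballI)
      fix y assume "y \<in> range (\<lambda>j. cmod (g z j) powr m j)"
      then obtain j where yj: "y = cmod (g z j) powr m j" by auto
      have "cmod (g z j) \<le> (\<Sum>i\<in>S j. cmod (c j i) * cmod (f z i))"
        unfolding c[OF z] S_def by (metis (no_types, lifting) norm_mult norm_sum sum.cong)
      then have "cmod (g z j) powr m j \<le> K j * Max ((\<lambda>i. cmod (f z i) powr m i) ` S j)"
        unfolding K_def
        by (intro bound_one[where jj = j]) (use m B[OF z] in \<open>auto simp: S_def B'_def le_max_iff_disj\<close>)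
      also have "\<dots> \<le> K j * E" unfolding E_def using K0
        by (intro mult_left_mono Max_mono) (auto simp: S_def)
      also have "\<dots> \<le> C * E" using KC E0 by (intro mult_right_mono) auto
      finally show "y \<le> C * E" using yj by simp
    qed
  qed
  then show ?thesis using C0 by blast
qed


lemma basis_inj: assumes "is_basis_C v" shows "inj v"
proof (rule injI, rule ccontr)
  fix i j assume e: "v i = v j" and ne: "i \<noteq> j"
  define c where "c k = (if k = i then 1 else if k = j then -1 else (0::complex))" for k
  have "(\<Sum>k\<in>UNIV. c k *s v k) = c i *s v i + c j *s v j"
  proof -
    have "(\<Sum>k\<in>UNIV. c k *s v k) = (\<Sum>k\<in>{i,j}. c k *s v k)"
      by (rule sum.mono_neutral_right) (auto simp: c_def)
    then show ?thesis using ne by simp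
  qed
  also have "\<dots> = 0" using e ne by (simp add: c_def)
  finally have "c i = 0" using assms unfolding is_basis_C_def by blast
  then show False by (simp add: c_def)
qed

lemma span_rep_vec:
  fixes u :: "'n::finite \<Rightarrow> complex^'m"
  assumes "x \<in> vec.span (u ` S)" "inj u"
  shows "\<exists>c. x = (\<Sum>i\<in>S. c i *s u i)"
proof -
  have "finite (u ` S)" by simp
  from vec.span_finite[OF this] assms(1) obtain a where "x = (\<Sum>y\<in>u ` S. a y *s y)" by auto
  also have "\<dots> = (\<Sum>i\<in>S. a (u i) *s u i)"
    using assms(2) by (subst sum.reindex) (auto simp: inj_on_def inj_def)
  finally show ?thesis by (intro exI[of _ "\<lambda>i. a (u i)"])
qed

lemma basis_indep_list:
  assumes "is_basis_C v" "distinct L"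
  shows "\<forall>k<length L. map v L ! k \<notin> vec.span (set (take k (map v L)))"
proof (intro allI impI notI)
  fix k assume k: "k < length L" and h: "map v L ! k \<in> vec.span (set (take k (map v L)))"
  define T where "T = set (take k L)"
  have jT: "L!k \<notin> T" unfolding T_def using assms(2) k
    by (metis distinct_take in_set_conv_nth length_take min_less_iff_conj nth_eq_iff_index_eq nth_take order_less_irrefl)
  have "v (L!k) \<in> vec.span (v ` T)" using h k unfolding T_def by (simp add: take_map)
  then obtain c where c: "v (L!k) = (\<Sum>i\<in>T. c i *s v i)"
    using span_rep_vec basis_inj[OF assms(1)] by blast
  define d where "d i = (if i \<in> T then c i else if i = L!k then -1 else 0)" for i
  have "(\<Sum>i\<in>UNIV. d i *s v i) = (\<Sum>i\<in>insert (L!k) T. d i *s v i)"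
    by (rule sum.mono_neutral_right) (auto simp: d_def)
  also have "\<dots> = d (L!k) *s v (L!k) + (\<Sum>i\<in>T. d i *s v i)"
    using jT by (simp add: T_def)
  also have "(\<Sum>i\<in>T. d i *s v i) = (\<Sum>i\<in>T. c i *s v i)"
    by (rule sum.cong) (auto simp: d_def)
  also have "d (L!k) *s v (L!k) + (\<Sum>i\<in>T. c i *s v i) = 0"
    using jT c by (simp add: d_def)
  finally have "d (L!k) = 0" using assms(1) unfolding is_basis_C_def by blast
  then show False using jT by (simp add: d_def)
qed


lemma exists_w:
  fixes v :: "'n::finite \<Rightarrow> complex^'n" and m :: "'n \<Rightarrow> real"
  assumes bv: "is_basis_C v"
  shows "\<exists>w. is_orthonormal_basis_C w \<and> (\<forall>j. w j \<in> vec.span (v ` {i. m i \<le> m j}))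
           \<and> (\<forall>j. v j \<in> vec.span (w ` {i. m i \<le> m j}))"
proof -
  obtain L0 :: "'n list" where L0: "set L0 = UNIV" "distinct L0"
    using finite_distinct_list[OF finite_class.finite_UNIV] by blast
  define L where "L = sort_key m L0"
  have L: "set L = UNIV" "distinct L" "sorted (map m L)" using L0 unfolding L_def by auto
  define xs where "xs = map v L"
  have gsh: "\<forall>k<length xs. xs!k \<notin> vec.span (set (take k xs))"
    using basis_indep_list[OF bv L(2)] unfolding xs_def length_map .
  obtain ys where ys_len: "length ys = length xs"
    and orth: "\<forall>i<length ys. \<forall>j<length ys. herm (ys!i) (ys!j) = (if i = j then 1 else 0)"
    and ha: "\<forall>k<length xs. ys!k \<in> vec.span (set (take (Suc k) xs))"
    and hb: "\<forall>k<length xs. xs!k \<in> vec.span (set (take (Suc k) ys))"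
    using gram_schmidt[OF gsh] by (elim exE conjE)
  define pos where "pos j = (THE k. k < length L \<and> L!k = j)" for j
  have pos: "pos j < length L \<and> L!(pos j) = j" for j
    unfolding pos_def by (rule theI') (use distinct_Ex1[OF L(2)] L(1) in auto)
  have pos_nth: "pos (L!k) = k" if "k < length L" for k
    using pos[of "L!k"] that nth_eq_iff_index_eq[OF L(2), of "pos (L!k)" k] by blast
  have mle: "m (L!p) \<le> m (L!k)" if "p \<le> k" "k < length L" for p k
    using sorted_nth_mono[OF L(3), of p k] that by simp
  define w where "w j = ys ! pos j" for j
  have worth: "herm (w i) (w j) = (if i = j then 1 else 0)" for i j
  proof -
    have "herm (w i) (w j) = (if pos i = pos j then 1 else 0)"
      unfolding w_def using orth pos[of i] pos[of j] ys_len xs_def by simp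
    moreover have "pos i = pos j \<longleftrightarrow> i = j" using pos[of i] pos[of j] by metis
    ultimately show ?thesis by simp
  qed
  have winj: "inj w"
  proof (rule injI)
    fix i j assume "w i = w j"
    then have "herm (w i) (w j) = 1" using worth[of j j] by simp
    then show "i = j" using worth[of i j] by (simp split: if_splits)
  qed
  have wa: "w j \<in> vec.span (v ` {i. m i \<le> m j})" for j
  proof -
    define k where "k = pos j"
    have k: "k < length L" "L!k = j" using pos[of j] k_def by auto
    have "w j \<in> vec.span (set (take (Suc k) xs))" using ha k xs_def w_def k_def by simp
    moreover have "set (take (Suc k) xs) \<subseteq> v ` {i. m i \<le> m j}"
    proof
      fix y assume "y \<in> set (take (Suc k) xs)"
      then obtain p where p: "p < length (take (Suc k) xs)" "y = take (Suc k) xs ! p"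
        by (metis in_set_conv_nth)
      then have "p \<le> k" "y = v (L!p)" using k unfolding xs_def by auto
      then show "y \<in> v ` {i. m i \<le> m j}" using mle[of p k] k by auto
    qed
    ultimately show ?thesis using vec.span_mono by blast
  qed
  have wb: "v j \<in> vec.span (w ` {i. m i \<le> m j})" for j
  proof -
    define k where "k = pos j"
    have k: "k < length L" "L!k = j" using pos[of j] k_def by auto
    have "xs!k = v j" using k unfolding xs_def by simp
    moreover have "xs!k \<in> vec.span (set (take (Suc k) ys))" using hb k(1) unfolding xs_def length_map by blast
    ultimately have "v j \<in> vec.span (set (take (Suc k) ys))" by simp
    moreover have "set (take (Suc k) ys) \<subseteq> w ` {i. m i \<le> m j}"
    proof
      fix y assume "y \<in> set (take (Suc k) ys)"
      then obtain p where p: "p < length (take (Suc k) ys)" "y = take (Suc k) ys ! p"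
        by (metis in_set_conv_nth)
      then have pk: "p \<le> k" "y = ys ! p" using k by auto
      then have "y = w (L!p)" unfolding w_def using pos_nth[of p] k by simp
      then show "y \<in> w ` {i. m i \<le> m j}" using mle[of p k] k pk by auto
    qed
    ultimately show ?thesis using vec.span_mono by blast
  qed
  have indep: "\<forall>c::'n \<Rightarrow> complex. (\<Sum>j\<in>UNIV. c j *s w j) = 0 \<longrightarrow> (\<forall>j. c j = 0)"
  proof (intro allI impI)
    fix c :: "'n \<Rightarrow> complex" and k assume h: "(\<Sum>j\<in>UNIV. c j *s w j) = 0"
    have "0 = herm (\<Sum>j\<in>UNIV. c j *s w j) (w k)" using h by simp
    also have "\<dots> = (\<Sum>j\<in>UNIV. c j * (if j = k then 1 else 0))"
      unfolding herm_sum_left herm_scale_left worth by simp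
    also have "\<dots> = c k" by (simp add: if_distrib cong: if_cong)
    finally show "c k = 0" by simp
  qed
  have spans: "\<forall>x::complex^'n. \<exists>c::'n \<Rightarrow> complex. x = (\<Sum>j\<in>UNIV. c j *s w j)"
  proof
    fix x :: "complex^'n"
    obtain c where "x = (\<Sum>j\<in>UNIV. c j *s v j)" using bv unfolding is_basis_C_def by blast
    moreover have "v j \<in> vec.span (range w)" for j
      using wb[of j] vec.span_mono[of "w ` {i. m i \<le> m j}" "range w"] by blast
    ultimately have "x \<in> vec.span (w ` UNIV)"
      by (auto intro!: vec.span_sum vec.span_scale)
    then show "\<exists>c. x = (\<Sum>j\<in>UNIV. c j *s w j)" using span_rep_vec winj by blast
  qed
  have "is_orthonormal_basis_C w"
    unfolding is_orthonormal_basis_C_def is_basis_C_def using indep spans worth by blast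
  then show ?thesis using wa wb by blast
qed


definition Gf :: "real \<Rightarrow> ereal" where
  "Gf t = (if t \<le> 0 then - \<infinity> else ereal (ln t))"

lemma mono_Gf: "mono Gf"
  unfolding mono_def Gf_def by auto

lemma logabs_eq: "mj > 0 \<Longrightarrow> ereal mj * logabs x = Gf (cmod x powr mj)"
  unfolding Gf_def logabs_def by (auto simp: ln_powr)

lemma Psi_eq:
  assumes "\<And>j. m j > 0"
  shows "Psi m u z = Gf (Max (range (\<lambda>j. cmod (herm z (u j)) powr m j)))"
proof -
  have "Psi m u z = Max (range (\<lambda>j. Gf (cmod (herm z (u j)) powr m j)))"
    unfolding Psi_def using logabs_eq assms by presburger
  also have "\<dots> = Max (Gf ` range (\<lambda>j. cmod (herm z (u j)) powr m j))"
    by (simp add: image_image)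
  also have "\<dots> = Gf (Max (range (\<lambda>j. cmod (herm z (u j)) powr m j)))"
    by (rule mono_Max_commute[symmetric, OF mono_Gf]) auto
  finally show ?thesis .
qed

lemma herm_sum_right: "herm a (\<Sum>i\<in>A. f i) = (\<Sum>i\<in>A. herm a (f i))"
  by (metis (no_types, lifting) herm_conj herm_sum_left cnj_sum sum.cong)

lemma herm_bound:
  assumes "z \<in> polydisc" shows "cmod (herm z a) \<le> (\<Sum>k\<in>UNIV. cmod (a$k))"
proof -
  have "cmod (herm z a) \<le> (\<Sum>k\<in>UNIV. cmod (z$k * cnj (a$k)))"
    unfolding herm_def by (rule norm_sum)
  also have "\<dots> \<le> (\<Sum>k\<in>UNIV. cmod (a$k))"
  proof (intro sum_mono)
    fix k
    have "cmod (z$k) \<le> 1" using assms unfolding polydisc_def by (simp add: less_imp_le)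
    then show "cmod (z$k * cnj (a$k)) \<le> cmod (a$k)"
      by (simp add: norm_mult mult_left_le_one_le)
  qed
  finally show ?thesis .
qed

lemma herm_nonzero:
  assumes "is_basis_C v" "z \<noteq> 0" shows "\<exists>j. herm z (v j) \<noteq> 0"
proof (rule ccontr)
  assume "\<not> ?thesis"
  then have h: "\<And>j. herm z (v j) = 0" by simp
  obtain c where "z = (\<Sum>j\<in>UNIV. c j *s v j)" using assms unfolding is_basis_C_def by blast
  then have "herm z z = (\<Sum>j\<in>UNIV. cnj (c j) * herm z (v j))"
    by (metis (no_types, lifting) herm_scale_right herm_sum_right sum.cong)
  also have "\<dots> = 0" using h by simp
  finally show False using assms(2) herm_self_eq_0 by blast
qed

lemma rep_from_span:
  fixes u :: "'n::finite \<Rightarrow> complex^'m"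
  assumes "x \<in> vec.span (u ` S)" "inj u"
  shows "\<exists>c. \<forall>z. herm z x = (\<Sum>i\<in>S. c i * herm z (u i))"
proof -
  obtain c where "x = (\<Sum>i\<in>S. c i *s u i)" using span_rep_vec[OF assms] by blast
  then have "\<forall>z. herm z x = (\<Sum>i\<in>S. cnj (c i) * herm z (u i))"
    by (simp add: herm_sum_right herm_scale_right)
  then show ?thesis by (intro exI[of _ "\<lambda>i. cnj (c i)"])
qed

lemma polydisc_sets: "polydisc \<in> sets lebesgue"
proof -
  have "polydisc = (\<Inter>i\<in>UNIV. {z::complex^'a. cmod (z$i) < 1})"
    unfolding polydisc_def by auto
  moreover have "open (\<Inter>i\<in>UNIV. {z::complex^'a. cmod (z$i) < 1})"
    by (intro open_INT finite_class.finite_UNIV ballI open_Collect_less continuous_intros)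
  ultimately have "open (polydisc :: (complex^'a) set)" by simp
  then show ?thesis by (metis borel_open sets_completionI_sets sets_lborel)
qed

lemma herm_meas: "(\<lambda>z. herm z a) \<in> borel_measurable (lebesgue_on polydisc)"
  by (intro continuous_imp_measurable_on_sets_lebesgue polydisc_sets)
     (unfold herm_def, intro continuous_intros)

lemma Gf_meas: "Gf \<in> borel_measurable borel"
  unfolding Gf_def by measurable

lemma E_meas: fixes u :: "'n::finite \<Rightarrow> complex^'m" shows "(\<lambda>z. Max (range (\<lambda>j. cmod (herm z (u j)) powr m j))) \<in> borel_measurable (lebesgue_on polydisc)"
proof -
  have "(\<lambda>z. cmod (herm z (u j)) powr m j) \<in> borel_measurable (lebesgue_on polydisc)" for j
    using herm_meas[of "u j"] by measurable
  then show ?thesis by (intro borel_measurable_Max finite_class.finite_UNIV) auto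
qed


theorem lemma2p4:
  fixes v :: "'n::finite \<Rightarrow> complex ^ 'n" and m :: "'n \<Rightarrow> real"
  assumes "is_basis_C v"
    and "\<And>j. m j > 0"
  shows "\<exists>w :: 'n \<Rightarrow> complex ^ 'n. is_orthonormal_basis_C w \<and>
           in_Linfty_polydisc (\<lambda>z. Psi m w z - Psi m v z)"
proof -
  note bv = assms(1) and mpos = assms(2)
  obtain w where ow: "is_orthonormal_basis_C w"
    and wa: "\<And>j. w j \<in> vec.span (v ` {i. m i \<le> m j})"
    and wb: "\<And>j. v j \<in> vec.span (w ` {i. m i \<le> m j})"
    using exists_w[OF bv, of m] by blast
  have bw: "is_basis_C w" using ow unfolding is_orthonormal_basis_C_def by blast
  have injv: "inj v" and injw: "inj w" using basis_inj bv bw by auto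
  define Ev where "Ev z = Max (range (\<lambda>j. cmod (herm z (v j)) powr m j))" for z
  define Ew where "Ew z = Max (range (\<lambda>j. cmod (herm z (w j)) powr m j))" for z
  define Bv where "Bv = (\<Sum>i\<in>UNIV. \<Sum>k\<in>UNIV. cmod (v i $ k))"
  define Bw where "Bw = (\<Sum>i\<in>UNIV. \<Sum>k\<in>UNIV. cmod (w i $ k))"
  have Bvb: "cmod (herm z (v i)) \<le> Bv" if "z \<in> polydisc" for z i
  proof -
    have "cmod (herm z (v i)) \<le> (\<Sum>k\<in>UNIV. cmod (v i $ k))" by (rule herm_bound[OF that])
    also have "\<dots> \<le> Bv" unfolding Bv_def
      by (rule member_le_sum[of i UNIV "\<lambda>i. \<Sum>k\<in>UNIV. cmod (v i $ k)"]) (auto intro: sum_nonneg)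
    finally show ?thesis .
  qed
  have Bwb: "cmod (herm z (w i)) \<le> Bw" if "z \<in> polydisc" for z i
  proof -
    have "cmod (herm z (w i)) \<le> (\<Sum>k\<in>UNIV. cmod (w i $ k))" by (rule herm_bound[OF that])
    also have "\<dots> \<le> Bw" unfolding Bw_def
      by (rule member_le_sum[of i UNIV "\<lambda>i. \<Sum>k\<in>UNIV. cmod (w i $ k)"]) (auto intro: sum_nonneg)
    finally show ?thesis .
  qed
  have "\<exists>C>0. \<forall>z\<in>polydisc. Max (range (\<lambda>j. cmod (herm z (w j)) powr m j))
            \<le> C * Max (range (\<lambda>j. cmod (herm z (v j)) powr m j))"
  proof (rule bound_all[where f = "\<lambda>z i. herm z (v i)" and g = "\<lambda>z j. herm z (w j)", OF mpos _ Bvb])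
    fix j
    obtain c where "\<forall>z. herm z (w j) = (\<Sum>i\<in>{i. m i \<le> m j}. c i * herm z (v i))"
      using rep_from_span[OF wa injv] by blast
    then show "\<exists>c. \<forall>z\<in>polydisc. herm z (w j) = (\<Sum>i\<in>{i. m i \<le> m j}. c i * herm z (v i))"
      by blast
  qed
  then obtain C1 where C1: "C1 > 0" "\<And>z. z \<in> polydisc \<Longrightarrow> Ew z \<le> C1 * Ev z"
    unfolding Ev_def Ew_def by blast
  have "\<exists>C>0. \<forall>z\<in>polydisc. Max (range (\<lambda>j. cmod (herm z (v j)) powr m j))
            \<le> C * Max (range (\<lambda>j. cmod (herm z (w j)) powr m j))"
  proof (rule bound_all[where f = "\<lambda>z i. herm z (w i)" and g = "\<lambda>z j. herm z (v j)", OF mpos _ Bwb])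
    fix j
    obtain c where "\<forall>z. herm z (v j) = (\<Sum>i\<in>{i. m i \<le> m j}. c i * herm z (w i))"
      using rep_from_span[OF wb injw] by blast
    then show "\<exists>c. \<forall>z\<in>polydisc. herm z (v j) = (\<Sum>i\<in>{i. m i \<le> m j}. c i * herm z (w i))"
      by blast
  qed
  then obtain C2 where C2: "C2 > 0" "\<And>z. z \<in> polydisc \<Longrightarrow> Ev z \<le> C2 * Ew z"
    unfolding Ev_def Ew_def by blast
  have PsiV: "Psi m v z = Gf (Ev z)" for z unfolding Ev_def by (rule Psi_eq[OF mpos])
  have PsiW: "Psi m w z = Gf (Ew z)" for z unfolding Ew_def by (rule Psi_eq[OF mpos])
  define K where "K = \<bar>ln C1\<bar> + \<bar>ln C2\<bar>"
  have key: "\<bar>Psi m w z - Psi m v z\<bar> \<le> ereal K" if z: "z \<in> polydisc" "z \<noteq> 0" for z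
  proof -
    obtain j where j: "herm z (v j) \<noteq> 0" using herm_nonzero[OF bv z(2)] by blast
    have "0 < cmod (herm z (v j)) powr m j" using j by simp
    also have "\<dots> \<le> Ev z" unfolding Ev_def by (rule Max_ge) auto
    finally have Ev0: "Ev z > 0" .
    have Ew0: "Ew z > 0" using C2(2)[OF z(1)] C2(1) Ev0
      by (smt (verit) mult_nonneg_nonpos)
    have "ln (Ew z) \<le> ln (C1 * Ev z)"
      using C1(2)[OF z(1)] C1(1) Ev0 Ew0 by (subst ln_le_cancel_iff) auto
    then have l1: "ln (Ew z) \<le> ln C1 + ln (Ev z)"
      using C1(1) Ev0 Ew0 by (simp add: ln_mult)
    have "ln (Ev z) \<le> ln (C2 * Ew z)"
      using C2(2)[OF z(1)] C2(1) Ev0 Ew0 by (subst ln_le_cancel_iff) auto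
    then have l2: "ln (Ev z) \<le> ln C2 + ln (Ew z)"
      using C2(1) Ev0 Ew0 by (simp add: ln_mult)
    have "Psi m w z - Psi m v z = ereal (ln (Ew z) - ln (Ev z))"
      unfolding PsiV PsiW Gf_def using Ev0 Ew0 by simp
    moreover have "\<bar>ln (Ew z) - ln (Ev z)\<bar> \<le> K" unfolding K_def using l1 l2 by linarith
    ultimately show ?thesis by simp
  qed
  have meas: "(\<lambda>z. Psi m w z - Psi m v z) \<in> borel_measurable (lebesgue_on polydisc)"
  proof -
    have "(\<lambda>z. Gf (Ev z)) \<in> borel_measurable (lebesgue_on polydisc)"
      unfolding Ev_def by (rule measurable_compose[OF E_meas Gf_meas])
    moreover have "(\<lambda>z. Gf (Ew z)) \<in> borel_measurable (lebesgue_on polydisc)"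
      unfolding Ew_def by (rule measurable_compose[OF E_meas Gf_meas])
    ultimately show ?thesis unfolding PsiV PsiW by (intro borel_measurable_ereal_diff)
  qed
  have ae: "AE z in lebesgue_on polydisc. \<bar>Psi m w z - Psi m v z\<bar> \<le> ereal K"
  proof -
    have "polydisc \<inter> space lebesgue \<in> sets lebesgue" using polydisc_sets by simp
    moreover have "AE z in lebesgue. z \<in> polydisc \<longrightarrow> \<bar>Psi m w z - Psi m v z\<bar> \<le> ereal K"
    proof -
      have "{0::complex^'n} \<in> null_sets lebesgue" by simp
      from AE_not_in[OF this] show ?thesis
        by eventually_elim (use key in auto)
    qed
    ultimately show ?thesis by (subst AE_restrict_space_iff) auto
  qed
  have "in_Linfty_polydisc (\<lambda>z. Psi m w z - Psi m v z)"
    unfolding in_Linfty_polydisc_def using meas ae by blast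
  then show ?thesis using ow by blast
qed

end
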